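(* Let $\pi_\theta$ be a policy with parameters $\theta$, acting for horizon $H$, producing states $s_t$, actions $a_t$ and rewards $r_t$ for $t=1,\dots,H$. Let $\gamma\in(0,1)$ be a discount factor and, for $1\le k\le H$, define the truncated (shortened-rollout) policy gradient estimator $$g_k = \sum_{t=k}^H \nabla_\theta \log \pi_\theta(a_t \mid s_t)\cdot G_t, \qquad G_t = \sum_{t'=t}^H \gamma^{t'-t} r_{t'}.$$ Assume $|r_t| \le R_{\max}$ for all $t$ and $\|\nabla_\theta \log \pi_\theta(a_t \mid s_t)\| \le G_{\max}$ for all $t$. Then, with $C = G_{\max}^2 R_{\max}^2$, $$\mathrm{Var}[g_k] \le \frac{C}{(1-\gamma)^2}\left( (H-k+1) - \frac{\gamma\,(1-\gamma^{H-k+1})}{1-\gamma} \right)^2,$$ and this upper bound decreases monotonically as $k$ increases.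
   Context: $g_k$ corresponds to starting rollouts after a verified prefix of $k-1$ steps, so that the remaining horizon is $H-k+1$. For the vector-valued random variable $g_k$, $\mathrm{Var}[g_k]$ denotes $\mathbb{E}\|g_k-\mathbb{E}g_k\|^2$, and $\|\cdot\|$ is the Euclidean norm. *)

theory Defs
  imports "HOL-Probability.Probability"
begin

definition disc_return :: "real \<Rightarrow> nat \<Rightarrow> (nat \<Rightarrow> real) \<Rightarrow> nat \<Rightarrow> real" where
  "disc_return \<gamma> H r t = (\<Sum>t'=t..H. \<gamma> ^ (t' - t) * r t')"

definition trunc_pg :: "real \<Rightarrow> nat \<Rightarrow> (nat \<Rightarrow> 'v::real_vector) \<Rightarrow> (nat \<Rightarrow> real) \<Rightarrow> nat \<Rightarrow> 'v" where
  "trunc_pg \<gamma> H score r k = (\<Sum>t=k..H. disc_return \<gamma> H r t *\<^sub>R score t)"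

definition vec_variance :: "'w measure \<Rightarrow> ('w \<Rightarrow> 'v::{banach, second_countable_topology}) \<Rightarrow> real" where
  "vec_variance M X = (\<integral>\<omega>. (norm (X \<omega> - (\<integral>\<omega>'. X \<omega>' \<partial>M)))\<^sup>2 \<partial>M)"

definition var_bound :: "real \<Rightarrow> real \<Rightarrow> nat \<Rightarrow> nat \<Rightarrow> real" where
  "var_bound C \<gamma> H k = C / (1 - \<gamma>)\<^sup>2 *
     (real (H - k + 1) - \<gamma> * (1 - \<gamma> ^ (H - k + 1)) / (1 - \<gamma>))\<^sup>2"

end

theory Submission imports Defs begin

lemma var_le:
  fixes X :: "'w \<Rightarrow> 'p::euclidean_space"
  assumes P: "prob_space M" and meas: "X \<in> borel_measurable M"
    and bnd: "\<And>\<omega>. \<omega> \<in> space M \<Longrightarrow> norm (X \<omega>) \<le> B"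
  shows "vec_variance M X \<le> B\<^sup>2"
proof -
  interpret prob_space M by fact
  define \<mu> where "\<mu> = integral\<^sup>L M X"
  have iX: "integrable M X"
    by (rule integrable_const_bound[where B=B]) (use bnd meas in auto)
  have iN: "integrable M (\<lambda>\<omega>. (norm (X \<omega>))\<^sup>2)"
  proof (rule integrable_const_bound[where B="B\<^sup>2"])
    show "AE x in M. norm ((norm (X x))\<^sup>2) \<le> B\<^sup>2"
      using bnd by (auto intro!: power_mono)
  qed (use meas in auto)
  have iI: "integrable M (\<lambda>\<omega>. X \<omega> \<bullet> \<mu>)" using iX by auto
  have eq: "\<And>\<omega>. (norm (X \<omega> - \<mu>))\<^sup>2 = (norm (X \<omega>))\<^sup>2 - 2 * (X \<omega> \<bullet> \<mu>) + (norm \<mu>)\<^sup>2"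
    by (simp add: power2_norm_eq_inner inner_simps inner_commute)
  have "vec_variance M X = (\<integral>\<omega>. (norm (X \<omega>))\<^sup>2 - 2 * (X \<omega> \<bullet> \<mu>) + (norm \<mu>)\<^sup>2 \<partial>M)"
    unfolding vec_variance_def \<mu>_def[symmetric] eq ..
  also have "\<dots> = (\<integral>\<omega>. (norm (X \<omega>))\<^sup>2 \<partial>M) - 2 * (\<integral>\<omega>. X \<omega> \<bullet> \<mu> \<partial>M) + (norm \<mu>)\<^sup>2"
    using iN iI by (simp add: prob_space)
  also have "(\<integral>\<omega>. X \<omega> \<bullet> \<mu> \<partial>M) = (norm \<mu>)\<^sup>2"
    using iX by (simp add: \<mu>_def power2_norm_eq_inner)
  also have "(\<integral>\<omega>. (norm (X \<omega>))\<^sup>2 \<partial>M) \<le> (\<integral>\<omega>. B\<^sup>2 \<partial>M)"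
    using iN bnd by (intro integral_mono) (auto intro!: power_mono)
  finally have "vec_variance M X \<le> B\<^sup>2 - (norm \<mu>)\<^sup>2" by (simp add: prob_space)
  then show ?thesis by (smt (verit) zero_le_power2)
qed

lemma geo_inner:
  fixes g :: real assumes "g \<noteq> 1" "t \<le> H"
  shows "(\<Sum>t'=t..H. g ^ (t' - t)) = (1 - g ^ (H - t + 1)) / (1 - g)"
proof -
  have "(\<Sum>t'=t..H. g ^ (t' - t)) = (\<Sum>j=0..H-t. g ^ j)"
    using sum.shift_bounds_cl_nat_ivl[of "\<lambda>t'. g ^ (t' - t)" 0 t "H - t"] assms by simp
  also have "\<dots> = (\<Sum>j<H-t+1. g ^ j)" by (intro sum.cong) auto
  also have "\<dots> = (1 - g ^ (H - t + 1)) / (1 - g)"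
  proof -
    have "1 - g \<noteq> 0" using assms by simp
    have "(\<Sum>j<H-t+1. g ^ j) = (g ^ (H-t+1) - 1) / (g - 1)"
      by (rule geometric_sum) (use assms in simp)
    also have "\<dots> = (1 - g ^ (H-t+1)) / (1 - g)"
      by (metis minus_divide_divide minus_diff_eq)
    finally show ?thesis .
  qed
  finally show ?thesis .
qed

lemma outer_sum:
  fixes g :: real assumes "g \<noteq> 1"
  shows "(\<Sum>j=0..N. (1 - g ^ (j + 1))) = real (N + 1) - g * (1 - g ^ (N + 1)) / (1 - g)"
  using assms
proof (induction N)
  case 0 then show ?case by (simp add: field_simps)
next
  case (Suc N)
  then show ?case by (simp add: field_simps)
qed

theorem theorem3:
  fixes M :: "'w measure"
    and \<pi> :: "'p::euclidean_space \<Rightarrow> 's \<Rightarrow> 'a \<Rightarrow> real"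
    and \<theta> :: "'p"
    and s :: "nat \<Rightarrow> 'w \<Rightarrow> 's" and a :: "nat \<Rightarrow> 'w \<Rightarrow> 'a"
    and r :: "nat \<Rightarrow> 'w \<Rightarrow> real"
    and score :: "nat \<Rightarrow> 'w \<Rightarrow> 'p"
    and \<gamma> Rmax Gmax :: real and H k :: nat
  assumes "prob_space M"
    and "0 < \<gamma>" and "\<gamma> < 1"
    and "1 \<le> k" and "k \<le> H"
    and score_def: "\<And>t \<omega>. t \<in> {1..H} \<Longrightarrow> \<omega> \<in> space M \<Longrightarrow>
           GDERIV (\<lambda>\<theta>'. ln (\<pi> \<theta>' (s t \<omega>) (a t \<omega>))) \<theta> :> score t \<omega>"
    and "\<And>t. t \<in> {1..H} \<Longrightarrow> r t \<in> borel_measurable M"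
    and "\<And>t. t \<in> {1..H} \<Longrightarrow> score t \<in> borel_measurable M"
    and "\<And>t \<omega>. t \<in> {1..H} \<Longrightarrow> \<omega> \<in> space M \<Longrightarrow> \<bar>r t \<omega>\<bar> \<le> Rmax"
    and "\<And>t \<omega>. t \<in> {1..H} \<Longrightarrow> \<omega> \<in> space M \<Longrightarrow> norm (score t \<omega>) \<le> Gmax"
  shows "vec_variance M (\<lambda>\<omega>. trunc_pg \<gamma> H (\<lambda>t. score t \<omega>) (\<lambda>t. r t \<omega>) k)
           \<le> var_bound (Gmax\<^sup>2 * Rmax\<^sup>2) \<gamma> H k
         \<and> (\<forall>k1 k2. 1 \<le> k1 \<longrightarrow> k1 \<le> k2 \<longrightarrow> k2 \<le> H \<longrightarrow>
              var_bound (Gmax\<^sup>2 * Rmax\<^sup>2) \<gamma> H k2 \<le> var_bound (Gmax\<^sup>2 * Rmax\<^sup>2) \<gamma> H k1)"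
proof -
  note A = assms
  define F where "F = (\<lambda>k'. \<Sum>t=k'..H. (1 - \<gamma> ^ (H - t + 1)) / (1 - \<gamma>))"
  have g1: "\<gamma> \<noteq> 1" "1 - \<gamma> > 0" using A by auto
  have Fnn: "0 \<le> (1 - \<gamma> ^ (H - t + 1)) / (1 - \<gamma>)" for t
  proof -
    have "\<gamma> ^ (H - t + 1) \<le> 1" using A by (intro power_le_one) auto
    then show ?thesis using A by (intro divide_nonneg_pos) auto
  qed
  have Fval: "var_bound (Gmax\<^sup>2 * Rmax\<^sup>2) \<gamma> H k' = (Gmax\<^sup>2 * Rmax\<^sup>2) * (F k')\<^sup>2" if "k' \<le> H" for k'
  proof -
    have "(\<Sum>t=k'..H. (1 - \<gamma> ^ (H - t + 1))) = (\<Sum>t=k'..H. (1 - \<gamma> ^ (H - (H + k' - t) + 1)))"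
      by (rule sum.atLeastAtMost_rev)
    also have "\<dots> = (\<Sum>t=k'..H. (1 - \<gamma> ^ ((t - k') + 1)))"
      by (intro sum.cong) auto
    also have "\<dots> = (\<Sum>j=0..H-k'. (1 - \<gamma> ^ (j + 1)))"
      using sum.shift_bounds_cl_nat_ivl[of "\<lambda>t. 1 - \<gamma> ^ ((t - k') + 1)" 0 k' "H - k'"] that by simp
    also have "\<dots> = real (H - k' + 1) - \<gamma> * (1 - \<gamma> ^ (H - k' + 1)) / (1 - \<gamma>)"
      using outer_sum[OF g1(1), of "H - k'"] that by simp
    finally have e: "(\<Sum>t=k'..H. (1 - \<gamma> ^ (H - t + 1))) = real (H - k' + 1) - \<gamma> * (1 - \<gamma> ^ (H - k' + 1)) / (1 - \<gamma>)" .
    have "F k' = (\<Sum>t=k'..H. (1 - \<gamma> ^ (H - t + 1))) / (1 - \<gamma>)"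
      unfolding F_def by (simp add: sum_divide_distrib)
    then show ?thesis unfolding var_bound_def e by (simp add: power_divide)
  qed
  have Fmono: "F k2 \<le> F k1" if "k1 \<le> k2" for k1 k2
    unfolding F_def using that by (intro sum_mono2 Fnn) auto
  have part2: "\<forall>k1 k2. 1 \<le> k1 \<longrightarrow> k1 \<le> k2 \<longrightarrow> k2 \<le> H \<longrightarrow>
              var_bound (Gmax\<^sup>2 * Rmax\<^sup>2) \<gamma> H k2 \<le> var_bound (Gmax\<^sup>2 * Rmax\<^sup>2) \<gamma> H k1"
  proof (intro allI impI)
    fix k1 k2 :: nat assume h: "1 \<le> k1" "k1 \<le> k2" "k2 \<le> H"
    have "0 \<le> F k2" unfolding F_def by (intro sum_nonneg Fnn)
    then have "(F k2)\<^sup>2 \<le> (F k1)\<^sup>2" using Fmono[OF h(2)] by (intro power_mono) auto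
    then show "var_bound (Gmax\<^sup>2 * Rmax\<^sup>2) \<gamma> H k2 \<le> var_bound (Gmax\<^sup>2 * Rmax\<^sup>2) \<gamma> H k1"
      using Fval h by (simp add: mult_left_mono)
  qed
  have ne: "H \<in> {1..H}" using A by auto
  have Gnn: "0 \<le> Gmax" if "space M \<noteq> {}"
    using that A(10)[OF ne] by (meson ex_in_conv norm_ge_zero order_trans)
  have Rnn: "0 \<le> Rmax" if "space M \<noteq> {}"
    using that A(9)[OF ne] by (meson abs_ge_zero ex_in_conv order_trans)
  have bnd: "norm (trunc_pg \<gamma> H (\<lambda>t. score t \<omega>) (\<lambda>t. r t \<omega>) k) \<le> Gmax * Rmax * F k"
    if w: "\<omega> \<in> space M" for \<omega>
  proof -
    have G: "\<bar>disc_return \<gamma> H (\<lambda>t. r t \<omega>) t\<bar> \<le> Rmax * ((1 - \<gamma> ^ (H - t + 1)) / (1 - \<gamma>))"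
      if t: "t \<in> {k..H}" for t
    proof -
      have "\<bar>disc_return \<gamma> H (\<lambda>t. r t \<omega>) t\<bar> \<le> (\<Sum>t'=t..H. \<bar>\<gamma> ^ (t' - t) * r t' \<omega>\<bar>)"
        unfolding disc_return_def by (rule sum_abs)
      also have "\<dots> \<le> (\<Sum>t'=t..H. \<gamma> ^ (t' - t) * Rmax)"
        using A t w by (intro sum_mono) (auto simp: abs_mult intro!: mult_left_mono)
      also have "\<dots> = Rmax * ((1 - \<gamma> ^ (H - t + 1)) / (1 - \<gamma>))"
        using geo_inner[OF g1(1), of t H] t by (simp add: sum_distrib_right[symmetric])
      finally show ?thesis .
    qed
    have "norm (trunc_pg \<gamma> H (\<lambda>t. score t \<omega>) (\<lambda>t. r t \<omega>) k)
        \<le> (\<Sum>t=k..H. norm (disc_return \<gamma> H (\<lambda>t. r t \<omega>) t *\<^sub>R score t \<omega>))"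
      unfolding trunc_pg_def by (rule norm_sum)
    also have "\<dots> \<le> (\<Sum>t=k..H. (Rmax * ((1 - \<gamma> ^ (H - t + 1)) / (1 - \<gamma>))) * Gmax)"
    proof (intro sum_mono)
      fix t assume t: "t \<in> {k..H}"
      have "norm (disc_return \<gamma> H (\<lambda>t. r t \<omega>) t *\<^sub>R score t \<omega>)
          = \<bar>disc_return \<gamma> H (\<lambda>t. r t \<omega>) t\<bar> * norm (score t \<omega>)" by simp
      also have "\<dots> \<le> (Rmax * ((1 - \<gamma> ^ (H - t + 1)) / (1 - \<gamma>))) * Gmax"
        using G[OF t] A(10)[of t \<omega>] t w A(4) Rnn Fnn[of t]
        by (intro mult_mono) auto
      finally show "norm (disc_return \<gamma> H (\<lambda>t. r t \<omega>) t *\<^sub>R score t \<omega>)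
          \<le> (Rmax * ((1 - \<gamma> ^ (H - t + 1)) / (1 - \<gamma>))) * Gmax" .
    qed
    also have "\<dots> = Gmax * Rmax * F k"
      unfolding F_def by (simp add: sum_distrib_left sum_distrib_right mult_ac)
    finally show ?thesis .
  qed
  have meas: "(\<lambda>\<omega>. trunc_pg \<gamma> H (\<lambda>t. score t \<omega>) (\<lambda>t. r t \<omega>) k) \<in> borel_measurable M"
    unfolding trunc_pg_def disc_return_def
  proof (intro borel_measurable_sum borel_measurable_scaleR borel_measurable_times borel_measurable_const)
    fix t t' assume "t \<in> {k..H}" "t' \<in> {t..H}"
    then show "(\<lambda>x. r t' x) \<in> borel_measurable M" using A by auto
  next
    fix t assume "t \<in> {k..H}"
    then show "(\<lambda>x. score t x) \<in> borel_measurable M" using A by auto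
  qed
  have part1: "vec_variance M (\<lambda>\<omega>. trunc_pg \<gamma> H (\<lambda>t. score t \<omega>) (\<lambda>t. r t \<omega>) k)
           \<le> var_bound (Gmax\<^sup>2 * Rmax\<^sup>2) \<gamma> H k"
  proof -
    have "vec_variance M (\<lambda>\<omega>. trunc_pg \<gamma> H (\<lambda>t. score t \<omega>) (\<lambda>t. r t \<omega>) k) \<le> (Gmax * Rmax * F k)\<^sup>2"
      by (rule var_le[OF A(1) meas bnd])
    also have "\<dots> = var_bound (Gmax\<^sup>2 * Rmax\<^sup>2) \<gamma> H k"
      using Fval[of k] A by (simp add: power_mult_distrib)
    finally show ?thesis .
  qed
  show ?thesis using part1 part2 by blast
qed

end
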